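(* Let $G\rightrightarrows X$ be a locally compact groupoid whose anchor $(t,s):G\to X\times X$ is proper, whose isotropy groups are Lie groups, and whose isotropy bundle admits continuous local cross-sections through each arrow. Suppose $X$ is connected and locally connected. Let $E\to X$ be a locally trivial Banach bundle of locally finite rank and $R:s^*E\to t^*E$ a representation of $G$ on $E$. If $R$ is trivial at some $x\in X$ (i.e. $R(g)=\mathrm{id}$ for all $g\in G(x)$), then $R$ is trivial at every point of $X$.
   Context: A locally compact groupoid is a topological groupoid (source $s$, target $t$, units $1x$) with locally compact Hausdorff arrow space and a continuous left Haar system (Radon measures $\mu^x$ with support $t^{-1}(x)$, left invariant, $x\mapsto\int\varphi\,d\mu^x$ continuous for $\varphi\in C_c(G)$). $G(x)=s^{-1}(x)\cap t^{-1}(x)$. "Isotropy bundle admits continuous local cross-sections through each arrow": for every $x$ and $g\in G(x)$ there are an open $U\ni x$ and a continuous $\gamma:U\to G$ with $\gamma(u)\in G(u)$ and $\gamma(x)=g$. Banach bundle (Fell): Hausdorff space $E$ with continuous open surjection $p:E\to X$, continuous fiberwise real vector operations, continuous norm making fibers Banach spaces, nets $e_i$ with $pe_i\to x$, $|e_i|\to0$ converging to $0_x$. Locally trivial of locally finite rank: each point has an open neighborhood $U$ and an isomorphism of Banach bundles $U\times\mathbb R^n\cong E|U$ over $\mathrm{id}_U$. A representation of $G$ on $E$ is a continuous fiberwise linear map $R:s^*E\to t^*E$ over $\mathrm{id}_G$ (operators $R(g):E_{sg}\to E_{tg}$) with $R(1x)=\mathrm{id}$ and $R(gh)=R(g)R(h)$.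 *)

theory Defs
  imports "HOL-Analysis.Analysis"
begin

text \<open>Arrows have type 'g, objects type 'x; s = source, t = target, u = unit map
  (x maps to 1x), m = partial multiplication (m g h defined when s g = t h), i = inverse.\<close>

definition topological_groupoid ::
  "('g::topological_space \<Rightarrow> 'x::topological_space) \<Rightarrow> ('g \<Rightarrow> 'x) \<Rightarrow> ('x \<Rightarrow> 'g)
   \<Rightarrow> ('g \<Rightarrow> 'g \<Rightarrow> 'g) \<Rightarrow> ('g \<Rightarrow> 'g) \<Rightarrow> bool" where
  "topological_groupoid s t u m i \<longleftrightarrow>
     (\<forall>x. s (u x) = x \<and> t (u x) = x)
   \<and> (\<forall>g h. s g = t h \<longrightarrow> s (m g h) = s h \<and> t (m g h) = t g)
   \<and> (\<forall>g h k. s g = t h \<and> s h = t k \<longrightarrow> m (m g h) k = m g (m h k))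
   \<and> (\<forall>g. m (u (t g)) g = g \<and> m g (u (s g)) = g)
   \<and> (\<forall>g. s (i g) = t g \<and> t (i g) = s g \<and> m (i g) g = u (s g) \<and> m g (i g) = u (t g))
   \<and> continuous_on UNIV s \<and> continuous_on UNIV t \<and> continuous_on UNIV u
   \<and> continuous_on UNIV i
   \<and> continuous_on {(g, h). s g = t h} (\<lambda>(g, h). m g h)"

definition isotropy :: "('g \<Rightarrow> 'x) \<Rightarrow> ('g \<Rightarrow> 'x) \<Rightarrow> 'x \<Rightarrow> 'g set" where
  "isotropy s t x = {g. s g = x \<and> t g = x}"

definition radon_measure :: "'g::topological_space measure \<Rightarrow> bool" where
  "radon_measure M \<longleftrightarrow>
     sets M = sets borel
   \<and> (\<forall>K. compact K \<longrightarrow> emeasure M K < \<infinity>)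
   \<and> (\<forall>A \<in> sets borel. emeasure M A = (INF U \<in> {U. open U \<and> A \<subseteq> U}. emeasure M U))
   \<and> (\<forall>U. open U \<longrightarrow> emeasure M U = (SUP K \<in> {K. compact K \<and> K \<subseteq> U}. emeasure M K))"

definition measure_support :: "'g::topological_space measure \<Rightarrow> 'g set" where
  "measure_support M = {g. \<forall>U. open U \<and> g \<in> U \<longrightarrow> emeasure M U > 0}"

definition Cc :: "('g::topological_space \<Rightarrow> real) \<Rightarrow> bool" where
  "Cc \<phi> \<longleftrightarrow> continuous_on UNIV \<phi> \<and> compact (closure {g. \<phi> g \<noteq> 0})"

definition left_haar_system ::
  "('g::topological_space \<Rightarrow> 'x::topological_space) \<Rightarrow> ('g \<Rightarrow> 'x)
   \<Rightarrow> ('g \<Rightarrow> 'g \<Rightarrow> 'g) \<Rightarrow> ('x \<Rightarrow> 'g measure) \<Rightarrow> bool" where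
  "left_haar_system s t m \<mu> \<longleftrightarrow>
     (\<forall>x. radon_measure (\<mu> x) \<and> measure_support (\<mu> x) = {g. t g = x})
   \<and> (\<forall>\<phi>. Cc \<phi> \<longrightarrow>
        (\<forall>g. integral\<^sup>L (\<mu> (s g)) (\<lambda>h. \<phi> (m g h)) = integral\<^sup>L (\<mu> (t g)) \<phi>)
      \<and> continuous_on UNIV (\<lambda>x. integral\<^sup>L (\<mu> x) \<phi>))"

definition locally_compact_groupoid ::
  "('g::t2_space \<Rightarrow> 'x::topological_space) \<Rightarrow> ('g \<Rightarrow> 'x) \<Rightarrow> ('x \<Rightarrow> 'g)
   \<Rightarrow> ('g \<Rightarrow> 'g \<Rightarrow> 'g) \<Rightarrow> ('g \<Rightarrow> 'g) \<Rightarrow> bool" where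
  "locally_compact_groupoid s t u m i \<longleftrightarrow>
     topological_groupoid s t u m i
   \<and> locally_compact_space (euclidean :: 'g topology)
   \<and> (\<exists>\<mu>. left_haar_system s t m \<mu>)"

definition proper_anchor :: "('g::topological_space \<Rightarrow> 'x::topological_space) \<Rightarrow> ('g \<Rightarrow> 'x) \<Rightarrow> bool" where
  "proper_anchor s t \<longleftrightarrow> (\<forall>K :: ('x \<times> 'x) set. compact K \<longrightarrow> compact {g. (t g, s g) \<in> K})"

definition isotropy_local_sections ::
  "('g::topological_space \<Rightarrow> 'x::topological_space) \<Rightarrow> ('g \<Rightarrow> 'x) \<Rightarrow> bool" where
  "isotropy_local_sections s t \<longleftrightarrow>
     (\<forall>x g. g \<in> isotropy s t x \<longrightarrow>
        (\<exists>U \<gamma>. open U \<and> x \<in> U \<and> continuous_on U \<gamma>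
               \<and> (\<forall>y\<in>U. \<gamma> y \<in> isotropy s t y) \<and> \<gamma> x = g))"

text \<open>R^n is represented as the functions nat => real vanishing from index n on,
  with the (product = Euclidean) topology.\<close>
definition euclid :: "nat \<Rightarrow> (nat \<Rightarrow> real) set" where
  "euclid n = {v. \<forall>j\<ge>n. v j = 0}"

definition dquot :: "((nat \<Rightarrow> real) \<Rightarrow> real) \<Rightarrow> (nat \<Rightarrow> real) \<Rightarrow> nat \<Rightarrow> real \<Rightarrow> real" where
  "dquot f v j h = (f (v(j := v j + h)) - f v) / h"

definition partial_deriv :: "nat \<Rightarrow> ((nat \<Rightarrow> real) \<Rightarrow> real) \<Rightarrow> (nat \<Rightarrow> real) \<Rightarrow> real" where
  "partial_deriv j f v = Lim (at 0) (dquot f v j)"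

fun Ck :: "nat \<Rightarrow> nat \<Rightarrow> (nat \<Rightarrow> real) set \<Rightarrow> ((nat \<Rightarrow> real) \<Rightarrow> real) \<Rightarrow> bool" where
  "Ck n 0 U f = continuous_on U f"
| "Ck n (Suc k) U f =
     (continuous_on U f
      \<and> (\<forall>j<n. \<forall>v\<in>U. \<exists>L. (dquot f v j \<longlongrightarrow> L) (at 0))
      \<and> (\<forall>j<n. Ck n k U (partial_deriv j f)))"

definition smooth_fun :: "nat \<Rightarrow> (nat \<Rightarrow> real) set \<Rightarrow> ((nat \<Rightarrow> real) \<Rightarrow> real) \<Rightarrow> bool" where
  "smooth_fun n U f \<longleftrightarrow> (\<forall>k. Ck n k U f)"

definition smooth_map :: "nat \<Rightarrow> nat \<Rightarrow> (nat \<Rightarrow> real) set \<Rightarrow> ((nat \<Rightarrow> real) \<Rightarrow> (nat \<Rightarrow> real)) \<Rightarrow> bool" where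
  "smooth_map n m U f \<longleftrightarrow> (\<forall>j<m. smooth_fun n U (\<lambda>v. f v j))"

definition chart :: "'a::topological_space set \<Rightarrow> nat \<Rightarrow> 'a set \<Rightarrow> ('a \<Rightarrow> nat \<Rightarrow> real) \<Rightarrow> bool" where
  "chart M n W \<phi> \<longleftrightarrow>
     W \<subseteq> M \<and> openin (top_of_set M) W
   \<and> \<phi> ` W \<subseteq> euclid n \<and> openin (top_of_set (euclid n)) (\<phi> ` W)
   \<and> inj_on \<phi> W \<and> continuous_on W \<phi> \<and> continuous_on (\<phi> ` W) (the_inv_into W \<phi>)"

definition smooth_atlas :: "'a::topological_space set \<Rightarrow> nat \<Rightarrow> ('a set \<times> ('a \<Rightarrow> nat \<Rightarrow> real)) set \<Rightarrow> bool" where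
  "smooth_atlas M n A \<longleftrightarrow>
     (\<forall>(W, \<phi>) \<in> A. chart M n W \<phi>)
   \<and> M \<subseteq> \<Union> (fst ` A)
   \<and> (\<forall>(W1, \<phi>1) \<in> A. \<forall>(W2, \<phi>2) \<in> A.
        smooth_map n n (\<phi>1 ` (W1 \<inter> W2)) (\<phi>2 \<circ> the_inv_into W1 \<phi>1))"

text \<open>R^{2n} = R^n x R^n: first and second block of coordinates.\<close>
definition blk1 :: "nat \<Rightarrow> (nat \<Rightarrow> real) \<Rightarrow> (nat \<Rightarrow> real)" where
  "blk1 n w = (\<lambda>j. if j < n then w j else 0)"
definition blk2 :: "nat \<Rightarrow> (nat \<Rightarrow> real) \<Rightarrow> (nat \<Rightarrow> real)" where
  "blk2 n w = (\<lambda>j. if j < n then w (n + j) else 0)"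

definition topological_group_on :: "'a::topological_space set \<Rightarrow> ('a \<Rightarrow> 'a \<Rightarrow> 'a) \<Rightarrow> ('a \<Rightarrow> 'a) \<Rightarrow> 'a \<Rightarrow> bool" where
  "topological_group_on M mul iv e \<longleftrightarrow>
     e \<in> M \<and> (\<forall>a\<in>M. \<forall>b\<in>M. mul a b \<in> M) \<and> (\<forall>a\<in>M. iv a \<in> M)
   \<and> (\<forall>a\<in>M. \<forall>b\<in>M. \<forall>c\<in>M. mul (mul a b) c = mul a (mul b c))
   \<and> (\<forall>a\<in>M. mul e a = a \<and> mul a e = a \<and> mul (iv a) a = e \<and> mul a (iv a) = e)
   \<and> continuous_on (M \<times> M) (\<lambda>(a, b). mul a b) \<and> continuous_on M iv"

definition lie_group :: "'a::topological_space set \<Rightarrow> ('a \<Rightarrow> 'a \<Rightarrow> 'a) \<Rightarrow> ('a \<Rightarrow> 'a) \<Rightarrow> 'a \<Rightarrow> bool" where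
  "lie_group M mul iv e \<longleftrightarrow>
     topological_group_on M mul iv e
   \<and> (\<exists>n A. smooth_atlas M n A
       \<and> (\<forall>(W1, \<phi>1) \<in> A. \<forall>(W2, \<phi>2) \<in> A. \<forall>(W3, \<phi>3) \<in> A.
            smooth_map (2 * n) n
              {w \<in> euclid (2 * n). blk1 n w \<in> \<phi>1 ` W1 \<and> blk2 n w \<in> \<phi>2 ` W2
                 \<and> mul (the_inv_into W1 \<phi>1 (blk1 n w)) (the_inv_into W2 \<phi>2 (blk2 n w)) \<in> W3}
              (\<lambda>w. \<phi>3 (mul (the_inv_into W1 \<phi>1 (blk1 n w)) (the_inv_into W2 \<phi>2 (blk2 n w)))))
       \<and> (\<forall>(W1, \<phi>1) \<in> A. \<forall>(W2, \<phi>2) \<in> A.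
            smooth_map n n
              {v \<in> \<phi>1 ` W1. iv (the_inv_into W1 \<phi>1 v) \<in> W2}
              (\<lambda>v. \<phi>2 (iv (the_inv_into W1 \<phi>1 v)))))"

text \<open>Total space 'e, projection p, fiberwise addition add, scalar multiplication sm,
  zero section z, norm nrm.\<close>

definition fiber :: "('e \<Rightarrow> 'x) \<Rightarrow> 'x \<Rightarrow> 'e set" where
  "fiber p x = {e. p e = x}"

definition banach_fiber ::
  "('e \<Rightarrow> 'x) \<Rightarrow> ('e \<Rightarrow> 'e \<Rightarrow> 'e) \<Rightarrow> (real \<Rightarrow> 'e \<Rightarrow> 'e) \<Rightarrow> ('x \<Rightarrow> 'e) \<Rightarrow> ('e \<Rightarrow> real) \<Rightarrow> 'x \<Rightarrow> bool" where
  "banach_fiber p add sm z nrm x \<longleftrightarrow>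
   (let F = fiber p x in
     z x \<in> F
   \<and> (\<forall>e\<in>F. \<forall>f\<in>F. add e f \<in> F) \<and> (\<forall>a. \<forall>e\<in>F. sm a e \<in> F)
   \<and> (\<forall>e\<in>F. \<forall>f\<in>F. \<forall>g\<in>F. add (add e f) g = add e (add f g))
   \<and> (\<forall>e\<in>F. \<forall>f\<in>F. add e f = add f e)
   \<and> (\<forall>e\<in>F. add (z x) e = e \<and> add e (sm (-1) e) = z x \<and> sm 1 e = e)
   \<and> (\<forall>a b. \<forall>e\<in>F. sm (a + b) e = add (sm a e) (sm b e) \<and> sm a (sm b e) = sm (a * b) e)
   \<and> (\<forall>a. \<forall>e\<in>F. \<forall>f\<in>F. sm a (add e f) = add (sm a e) (sm a f))
   \<and> (\<forall>e\<in>F. nrm e = 0 \<longleftrightarrow> e = z x)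
   \<and> (\<forall>a. \<forall>e\<in>F. nrm (sm a e) = \<bar>a\<bar> * nrm e)
   \<and> (\<forall>e\<in>F. \<forall>f\<in>F. nrm (add e f) \<le> nrm e + nrm f)
   \<and> (\<forall>X::nat \<Rightarrow> 'e. (\<forall>k. X k \<in> F)
        \<and> (\<forall>\<epsilon>>0. \<exists>N. \<forall>k\<ge>N. \<forall>l\<ge>N. nrm (add (X k) (sm (-1) (X l))) < \<epsilon>)
        \<longrightarrow> (\<exists>L\<in>F. (\<lambda>k. nrm (add (X k) (sm (-1) L))) \<longlonglongrightarrow> 0)))"

text \<open>Fell's Banach bundle axioms; nets are expressed by filters on the total space.\<close>
definition banach_bundle ::
  "('e::t2_space \<Rightarrow> 'x::topological_space) \<Rightarrow> ('e \<Rightarrow> 'e \<Rightarrow> 'e) \<Rightarrow> (real \<Rightarrow> 'e \<Rightarrow> 'e)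
   \<Rightarrow> ('x \<Rightarrow> 'e) \<Rightarrow> ('e \<Rightarrow> real) \<Rightarrow> bool" where
  "banach_bundle p add sm z nrm \<longleftrightarrow>
     continuous_on UNIV p \<and> (\<forall>U. open U \<longrightarrow> open (p ` U)) \<and> surj p
   \<and> continuous_on {(e, f). p e = p f} (\<lambda>(e, f). add e f)
   \<and> continuous_on UNIV (\<lambda>(a, e). sm a e)
   \<and> continuous_on UNIV nrm
   \<and> (\<forall>x. banach_fiber p add sm z nrm x)
   \<and> (\<forall>(F :: 'e filter) x. (p \<longlongrightarrow> x) F \<and> (nrm \<longlongrightarrow> 0) F \<longrightarrow> ((\<lambda>e. e) \<longlongrightarrow> z x) F)"

definition locally_trivial_finite_rank ::
  "('e::topological_space \<Rightarrow> 'x::topological_space) \<Rightarrow> ('e \<Rightarrow> 'e \<Rightarrow> 'e) \<Rightarrow> (real \<Rightarrow> 'e \<Rightarrow> 'e) \<Rightarrow> bool" where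
  "locally_trivial_finite_rank p add sm \<longleftrightarrow>
     (\<forall>x. \<exists>U n h h'. open U \<and> x \<in> U
        \<and> homeomorphism (U \<times> euclid n) (p -` U) h h'
        \<and> (\<forall>y\<in>U. \<forall>v\<in>euclid n. p (h (y, v)) = y)
        \<and> (\<forall>y\<in>U. \<forall>v\<in>euclid n. \<forall>w\<in>euclid n. \<forall>a b.
             h (y, \<lambda>j. a * v j + b * w j) = add (sm a (h (y, v))) (sm b (h (y, w)))))"

definition groupoid_representation ::
  "('g::topological_space \<Rightarrow> 'x) \<Rightarrow> ('g \<Rightarrow> 'x) \<Rightarrow> ('x \<Rightarrow> 'g) \<Rightarrow> ('g \<Rightarrow> 'g \<Rightarrow> 'g)
   \<Rightarrow> ('e::topological_space \<Rightarrow> 'x) \<Rightarrow> ('e \<Rightarrow> 'e \<Rightarrow> 'e) \<Rightarrow> (real \<Rightarrow> 'e \<Rightarrow> 'e)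
   \<Rightarrow> ('g \<Rightarrow> 'e \<Rightarrow> 'e) \<Rightarrow> bool" where
  "groupoid_representation s t u m p add sm R \<longleftrightarrow>
     (\<forall>g e. p e = s g \<longrightarrow> p (R g e) = t g)
   \<and> continuous_on {(g, e). s g = p e} (\<lambda>(g, e). (g, R g e))
   \<and> (\<forall>g. \<forall>e\<in>fiber p (s g). \<forall>f\<in>fiber p (s g). R g (add e f) = add (R g e) (R g f))
   \<and> (\<forall>g a. \<forall>e\<in>fiber p (s g). R g (sm a e) = sm a (R g e))
   \<and> (\<forall>x. \<forall>e\<in>fiber p x. R (u x) e = e)
   \<and> (\<forall>g h. s g = t h \<longrightarrow> (\<forall>e\<in>fiber p (s h). R (m g h) e = R g (R h e)))"

definition rep_trivial_at ::
  "('g \<Rightarrow> 'x) \<Rightarrow> ('g \<Rightarrow> 'x) \<Rightarrow> ('e \<Rightarrow> 'x) \<Rightarrow> ('g \<Rightarrow> 'e \<Rightarrow> 'e) \<Rightarrow> 'x \<Rightarrow> bool" where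
  "rep_trivial_at s t p R x \<longleftrightarrow> (\<forall>g\<in>isotropy s t x. \<forall>e\<in>fiber p x. R g e = e)"

end

theory Submission
  imports Defs
begin


definition ev :: "nat \<Rightarrow> nat \<Rightarrow> real" where "ev j = (\<lambda>i. if i = j then 1 else 0)"
definition nn :: "nat \<Rightarrow> (nat \<Rightarrow> real) \<Rightarrow> real" where "nn n v = (\<Sum>i<n. \<bar>v i\<bar>)"
definition linE :: "nat \<Rightarrow> ((nat \<Rightarrow> real) \<Rightarrow> (nat \<Rightarrow> real)) \<Rightarrow> bool" where
  "linE n A \<longleftrightarrow> (\<forall>v\<in>euclid n. A v \<in> euclid n) \<and>
     (\<forall>v\<in>euclid n. \<forall>w\<in>euclid n. \<forall>a b. A (\<lambda>j. a * v j + b * w j) = (\<lambda>j. a * A v j + b * A w j))"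

lemma euclid_comb: "v \<in> euclid n \<Longrightarrow> w \<in> euclid n \<Longrightarrow> (\<lambda>j. a * v j + b * w j) \<in> euclid n"
  by (simp add: euclid_def)

lemma ev_euclid: "j < n \<Longrightarrow> ev j \<in> euclid n"
  by (simp add: euclid_def ev_def)

lemma linE_lin: "linE n A \<Longrightarrow> v \<in> euclid n \<Longrightarrow> w \<in> euclid n \<Longrightarrow>
   A (\<lambda>j. a * v j + b * w j) = (\<lambda>j. a * A v j + b * A w j)"
  unfolding linE_def by blast

lemma linE_comp: "linE n B \<Longrightarrow> linE n C \<Longrightarrow> linE n (B \<circ> C)"
  unfolding linE_def by simp

lemma linE_id: "linE n id" unfolding linE_def by simp

lemma linE_pow: "linE n A \<Longrightarrow> linE n (A ^^ k)"
  by (induction k) (auto simp: linE_id linE_comp)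

lemma linE_decomp:
  assumes B: "linE n B" and v: "v \<in> euclid n"
  shows "B v i = (\<Sum>j<n. v j * B (ev j) i)"
proof -
  have "m \<le> n \<Longrightarrow> B (\<lambda>i. if i < m then v i else 0) i = (\<Sum>j<m. v j * B (ev j) i)" for m
  proof (induction m)
    case 0
    have z: "(\<lambda>i. 0::real) \<in> euclid n" by (simp add: euclid_def)
    have "B (\<lambda>j. 0 * (0::real) + 0 * 0) = (\<lambda>j. 0 * B (\<lambda>i. 0) j + 0 * B (\<lambda>i. 0) j)"
      using linE_lin[OF B z z, of 0 0] by simp
    then show ?case by simp
  next
    case (Suc m)
    define t where "t = (\<lambda>i. if i < m then v i else (0::real))"
    have t: "t \<in> euclid n" using v Suc.prems by (auto simp: t_def euclid_def)
    have e: "ev m \<in> euclid n" using Suc.prems by (simp add: ev_euclid)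
    have eq: "(\<lambda>i. if i < Suc m then v i else 0) = (\<lambda>i. 1 * t i + v m * ev m i)"
      by (auto simp: t_def ev_def fun_eq_iff less_Suc_eq)
    have "B (\<lambda>i. 1 * t i + v m * ev m i) = (\<lambda>i. 1 * B t i + v m * B (ev m) i)"
      using B t e unfolding linE_def by blast
    then show ?case using Suc by (simp add: eq t_def[symmetric])
  qed
  moreover have "(\<lambda>i. if i < n then v i else 0) = v" using v by (auto simp: euclid_def)
  ultimately show ?thesis by (metis order_refl)
qed

lemma linE_bound:
  assumes B: "linE n B" and v: "v \<in> euclid n"
  shows "nn n (\<lambda>i. B v i - v i) \<le> (\<Sum>j<n. nn n (\<lambda>i. B (ev j) i - ev j i)) * nn n v"
proof -
  let ?c = "\<lambda>j. nn n (\<lambda>i. B (ev j) i - ev j i)"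
  have vi: "v i = (\<Sum>j<n. v j * ev j i)" if "i < n" for i
    using that by (simp add: ev_def sum.delta' if_distrib cong: if_cong)
  have eq: "B v i - v i = (\<Sum>j<n. v j * (B (ev j) i - ev j i))" if "i < n" for i
    using linE_decomp[OF B v, of i] vi[OF that] by (simp add: sum_subtractf right_diff_distrib)
  have "nn n (\<lambda>i. B v i - v i) = (\<Sum>i<n. \<bar>\<Sum>j<n. v j * (B (ev j) i - ev j i)\<bar>)"
    unfolding nn_def using eq by simp
  also have "\<dots> \<le> (\<Sum>i<n. \<Sum>j<n. \<bar>v j\<bar> * \<bar>B (ev j) i - ev j i\<bar>)"
    by (intro sum_mono order_trans[OF sum_abs]) (simp add: abs_mult)
  also have "\<dots> = (\<Sum>j<n. \<bar>v j\<bar> * ?c j)"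
    by (subst sum.swap) (simp add: nn_def sum_distrib_left)
  also have "\<dots> \<le> (\<Sum>j<n. \<bar>v j\<bar> * (\<Sum>j<n. ?c j))"
  proof (intro sum_mono mult_left_mono)
    fix j assume "j \<in> {..<n}"
    then show "?c j \<le> (\<Sum>j<n. ?c j)"
      by (intro member_le_sum) (auto simp: nn_def)
  qed simp
  also have "\<dots> = (\<Sum>j<n. ?c j) * nn n v" by (simp add: nn_def sum_distrib_right mult.commute)
  finally show ?thesis .
qed

lemma nss:
  assumes A: "linE n A"
    and bd: "\<And>k. (\<Sum>j<n. nn n (\<lambda>i. (A ^^ k) (ev j) i - ev j i)) \<le> 1/2"
    and v: "v \<in> euclid n"
  shows "A v = v"
proof -
  have Ak: "linE n (A ^^ k)" for k by (rule linE_pow[OF A])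
  have nnpos: "0 \<le> nn n x" for x by (simp add: nn_def sum_nonneg)
  have B: "nn n (\<lambda>i. (A ^^ k) x i - x i) \<le> 1/2 * nn n x" if "x \<in> euclid n" for k x
    using linE_bound[OF Ak that, of k] bd[of k] nnpos[of x] mult_right_mono by fastforce
  have Av: "A v \<in> euclid n" using A v by (simp add: linE_def)
  define w where "w = (\<lambda>j. 1 * A v j + (-1) * v j)"
  have w: "w \<in> euclid n" unfolding w_def by (rule euclid_comb[OF Av v])
  have Akw: "(A ^^ k) w i = (A ^^ Suc k) v i - (A ^^ k) v i" for k i
  proof -
    have "(A ^^ k) w = (\<lambda>j. 1 * (A ^^ k) (A v) j + (-1) * (A ^^ k) v j)"
      using Ak[of k] Av v unfolding linE_def w_def by blast
    then show ?thesis by (simp add: funpow_Suc_right del: funpow.simps)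
  qed
  have tel: "(\<Sum>k<N. (A ^^ k) w i) = (A ^^ N) v i - v i" for N i
    using sum_lessThan_telescope[of "\<lambda>k. (A ^^ k) v i" N] by (simp add: Akw del: funpow.simps)
  have main: "real N * nn n w \<le> 1/2 * nn n v + real N * (1/2 * nn n w)" for N
  proof -
    have "real N * nn n w = (\<Sum>i<n. \<bar>(\<Sum>k<N. (A ^^ k) w i) - (\<Sum>k<N. (A ^^ k) w i - w i)\<bar>)"
      by (simp add: nn_def sum_distrib_left sum_subtractf abs_mult)
    also have "\<dots> \<le> (\<Sum>i<n. \<bar>(A ^^ N) v i - v i\<bar> + (\<Sum>k<N. \<bar>(A ^^ k) w i - w i\<bar>))"
      unfolding tel by (intro sum_mono order_trans[OF abs_triangle_ineq4] add_left_mono sum_abs)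
    also have "\<dots> = nn n (\<lambda>i. (A ^^ N) v i - v i) + (\<Sum>k<N. nn n (\<lambda>i. (A ^^ k) w i - w i))"
      by (simp add: nn_def sum.distrib sum.swap[of _ "{..<N}"])
    also have "\<dots> \<le> 1/2 * nn n v + (\<Sum>k<N. 1/2 * nn n w)"
      by (intro add_mono B sum_mono v w)
    finally show ?thesis by simp
  qed
  have "nn n w = 0"
  proof (rule ccontr)
    assume ne: "nn n w \<noteq> 0"
    then have pos: "nn n w > 0" using nnpos[of w] by simp
    obtain N where N: "nn n v / (nn n w) < real N" using reals_Archimedean2 by blast
    have "nn n v < real N * nn n w" using N pos by (simp add: field_simps)
    then show False using main[of N] by simp
  qed
  then have "\<forall>i<n. w i = 0" unfolding nn_def by (simp add: sum_nonneg_eq_0_iff)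
  then have "w = (\<lambda>i. 0)" using w by (auto simp: euclid_def intro!: ext) (metis not_le)
  then show ?thesis unfolding w_def by (auto simp: fun_eq_iff dest: fun_cong)
qed


lemma tg_facts:
  assumes "topological_groupoid s t u m i"
  shows "\<And>x. s (u x) = x" "\<And>x. t (u x) = x"
    "\<And>g h. s g = t h \<Longrightarrow> s (m g h) = s h" "\<And>g h. s g = t h \<Longrightarrow> t (m g h) = t g"
    "\<And>g. m (u (t g)) g = g" "\<And>g. m g (u (s g)) = g"
    "continuous_on UNIV s" "continuous_on UNIV t" "continuous_on UNIV u"
  using assms unfolding topological_groupoid_def by (elim conjE; simp)+
lemma cov: "open S \<Longrightarrow> continuous_on S f \<Longrightarrow> open B \<Longrightarrow> open (f -` B \<inter> S)"
  using continuous_on_open_vimage by metis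

lemma agree_closure:
  fixes f1 f2 :: "'a::topological_space \<Rightarrow> 'b::t2_space"
  assumes Op: "open Op" and c1: "continuous_on Op f1" and c2: "continuous_on Op f2"
    and ag: "\<forall>y\<in>A \<inter> Op. f1 y = f2 y" and xO: "x \<in> Op" and xA: "x \<in> closure A"
  shows "f1 x = f2 x"
proof (rule ccontr)
  assume "f1 x \<noteq> f2 x"
  from hausdorff[OF this] obtain P Q where PQ: "open P" "open Q" "f1 x \<in> P" "f2 x \<in> Q" "P \<inter> Q = {}"
    by blast
  define W where "W = (f1 -` P \<inter> Op) \<inter> (f2 -` Q \<inter> Op)"
  have "open W" unfolding W_def
  proof (rule open_Int)
    show "open (f1 -` P \<inter> Op)" by (rule cov[OF Op c1 PQ(1)])
    show "open (f2 -` Q \<inter> Op)" by (rule cov[OF Op c2 PQ(2)])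
  qed
  moreover have "W \<inter> A = {}"
  proof (rule equals0I)
    fix y assume y: "y \<in> W \<inter> A"
    then have "f1 y \<in> P" "f2 y \<in> Q" "y \<in> A \<inter> Op" unfolding W_def by simp_all
    moreover have "f1 y = f2 y" using ag \<open>y \<in> A \<inter> Op\<close> by blast
    ultimately have "f1 y \<in> P \<inter> Q" by simp
    then show False using PQ(5) by simp
  qed
  ultimately have "W \<inter> closure A = {}" using open_Int_closure_eq_empty by metis
  moreover have "x \<in> W" using xO PQ by (simp add: W_def)
  ultimately show False using xA by (metis IntI empty_iff)
qed

lemma groupoid_X_sep:
  fixes s t :: "'g::t2_space \<Rightarrow> 'x::topological_space" and a b :: 'x
  assumes TG: "topological_groupoid s t u m i" and ab: "a \<noteq> b"
  shows "\<exists>P Q. open P \<and> open Q \<and> a \<in> P \<and> b \<in> Q \<and> P \<inter> Q = {}"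
proof -
  have su: "\<And>x. s (u x) = x" and cu: "continuous_on UNIV u" using tg_facts[OF TG] by auto
  have "u a \<noteq> u b" using su ab by metis
  then obtain U V where UV: "open U" "open V" "u a \<in> U" "u b \<in> V" "U \<inter> V = {}"
    using hausdorff[of "u a" "u b"] by metis
  show ?thesis
  proof (intro exI conjI)
    show "open (u -` U)" by (rule open_vimage[OF UV(1) cu])
    show "open (u -` V)" by (rule open_vimage[OF UV(2) cu])
    show "a \<in> u -` U" "b \<in> u -` V" "u -` U \<inter> u -` V = {}" using UV by auto
  qed
qed

lemma groupoid_X_Hausdorff:
  fixes s t :: "'g::t2_space \<Rightarrow> 'x::topological_space"
  assumes TG: "topological_groupoid s t u m i"
  shows "Hausdorff_space (euclidean :: 'x topology)"
  unfolding Hausdorff_space_def disjnt_def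
proof (intro allI impI)
  fix x y :: 'x assume "x \<in> topspace euclidean \<and> y \<in> topspace euclidean \<and> x \<noteq> y"
  then obtain U V where "open U" "open V" "x \<in> U" "y \<in> V" "U \<inter> V = {}"
    using groupoid_X_sep[OF TG, of x y] by metis
  then show "\<exists>U V. openin euclidean U \<and> openin euclidean V \<and> x \<in> U \<and> y \<in> V \<and> U \<inter> V = {}"
    by auto
qed

lemma groupoid_compact_closed:
  fixes s t :: "'g::t2_space \<Rightarrow> 'x::topological_space"
  assumes TG: "topological_groupoid s t u m i" and K: "compact (K::'x set)"
  shows "closed K"
  using compactin_imp_closedin[OF groupoid_X_Hausdorff[OF TG], of K] K by simp

lemma groupoid_diag_closed:
  fixes s t :: "'g::t2_space \<Rightarrow> 'x::topological_space"
  assumes TG: "topological_groupoid s t u m i"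
  shows "closed {g. s g = t g}"
proof -
  have cs: "continuous_on UNIV s" and ct: "continuous_on UNIV t" using tg_facts[OF TG] by auto
  have "open (- {g. s g = t g})"
  proof (subst open_subopen, intro ballI)
    fix g assume "g \<in> - {g. s g = t g}"
    then obtain P Q where PQ: "open P" "open Q" "s g \<in> P" "t g \<in> Q" "P \<inter> Q = {}"
      using groupoid_X_sep[OF TG, of "s g" "t g"] by auto
    show "\<exists>T. open T \<and> g \<in> T \<and> T \<subseteq> - {g. s g = t g}"
    proof (intro exI conjI)
      show "open (s -` P \<inter> t -` Q)" by (rule open_Int[OF open_vimage[OF PQ(1) cs] open_vimage[OF PQ(2) ct]])
      show "g \<in> s -` P \<inter> t -` Q" using PQ by auto
      show "s -` P \<inter> t -` Q \<subseteq> - {g. s g = t g}" using PQ by auto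
    qed
  qed
  then show ?thesis by (simp add: closed_def)
qed

lemma rep_facts:
  assumes "groupoid_representation s t u m p add sm R"
  shows "\<And>g e. p e = s g \<Longrightarrow> p (R g e) = t g"
    "continuous_on {(g, e). s g = p e} (\<lambda>(g, e). (g, R g e))"
    "\<And>g e f. p e = s g \<Longrightarrow> p f = s g \<Longrightarrow> R g (add e f) = add (R g e) (R g f)"
    "\<And>g a e. p e = s g \<Longrightarrow> R g (sm a e) = sm a (R g e)"
    "\<And>x e. p e = x \<Longrightarrow> R (u x) e = e"
    "\<And>g h e. s g = t h \<Longrightarrow> p e = s h \<Longrightarrow> R (m g h) e = R g (R h e)"
proof -
  have D: "(\<forall>g e. p e = s g \<longrightarrow> p (R g e) = t g)
   \<and> continuous_on {(g, e). s g = p e} (\<lambda>(g, e). (g, R g e))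
   \<and> (\<forall>g. \<forall>e\<in>fiber p (s g). \<forall>f\<in>fiber p (s g). R g (add e f) = add (R g e) (R g f))
   \<and> (\<forall>g a. \<forall>e\<in>fiber p (s g). R g (sm a e) = sm a (R g e))
   \<and> (\<forall>x. \<forall>e\<in>fiber p x. R (u x) e = e)
   \<and> (\<forall>g h. s g = t h \<longrightarrow> (\<forall>e\<in>fiber p (s h). R (m g h) e = R g (R h e)))"
    using assms unfolding groupoid_representation_def by assumption
  note d1 = D[THEN conjunct1] and d2 = D[THEN conjunct2, THEN conjunct1]
    and d3 = D[THEN conjunct2, THEN conjunct2, THEN conjunct1]
    and d4 = D[THEN conjunct2, THEN conjunct2, THEN conjunct2, THEN conjunct1]
    and d5 = D[THEN conjunct2, THEN conjunct2, THEN conjunct2, THEN conjunct2, THEN conjunct1]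
    and d6 = D[THEN conjunct2, THEN conjunct2, THEN conjunct2, THEN conjunct2, THEN conjunct2]
  show "\<And>g e. p e = s g \<Longrightarrow> p (R g e) = t g" using d1 by simp
  show "continuous_on {(g, e). s g = p e} (\<lambda>(g, e). (g, R g e))" by (rule d2)
  show "\<And>g e f. p e = s g \<Longrightarrow> p f = s g \<Longrightarrow> R g (add e f) = add (R g e) (R g f)" using d3 by (simp add: fiber_def)
  show "\<And>g a e. p e = s g \<Longrightarrow> R g (sm a e) = sm a (R g e)" using d4 by (simp add: fiber_def)
  show "\<And>x e. p e = x \<Longrightarrow> R (u x) e = e" using d5 by (auto simp: fiber_def)
  show "\<And>g h e. s g = t h \<Longrightarrow> p e = s h \<Longrightarrow> R (m g h) e = R g (R h e)" using d6 by (simp add: fiber_def)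
qed

lemma bb_sm:
  assumes "banach_bundle p add sm z nrm" "p e = x"
  shows "p (sm a e) = x"
proof -
  have "\<forall>x. banach_fiber p add sm z nrm x" using assms(1)[unfolded banach_bundle_def] by (elim conjE)
  then have "banach_fiber p add sm z nrm x" by (rule spec)
  then have "\<forall>a. \<forall>e\<in>fiber p x. sm a e \<in> fiber p x" unfolding banach_fiber_def Let_def by (elim conjE)
  then show ?thesis using assms(2) by (simp add: fiber_def)
qed

lemma cont_R:
  assumes cR: "continuous_on {(g, e). s g = p e} (\<lambda>(g, e). (g, R g e))"
    and ca: "continuous_on S a" and cb: "continuous_on S b" and ab: "\<And>x. x \<in> S \<Longrightarrow> s (a x) = p (b x)"
  shows "continuous_on S (\<lambda>x. R (a x) (b x))"
proof -
  have c1: "continuous_on S (\<lambda>x. (a x, b x))" by (intro continuous_on_Pair ca cb)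
  have "(\<lambda>x. (a x, b x)) ` S \<subseteq> {(g, e). s g = p e}" using ab by auto
  then have "continuous_on S (\<lambda>x. (\<lambda>(g, e). (g, R g e)) (a x, b x))"
    by (rule continuous_on_compose2[OF cR c1])
  then have "continuous_on S (\<lambda>x. snd ((\<lambda>(g, e). (g, R g e)) (a x, b x)))"
    by (rule continuous_on_snd)
  then show ?thesis by simp
qed

lemma isotropy_iff: "g \<in> isotropy s t y \<longleftrightarrow> s g = y \<and> t g = y"
  by (simp add: isotropy_def)


locale trivloc =
  fixes s t :: "'g::t2_space \<Rightarrow> 'x::topological_space" and u :: "'x \<Rightarrow> 'g"
    and m :: "'g \<Rightarrow> 'g \<Rightarrow> 'g" and i :: "'g \<Rightarrow> 'g"
    and p :: "'e::t2_space \<Rightarrow> 'x" and add :: "'e \<Rightarrow> 'e \<Rightarrow> 'e"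
    and sm :: "real \<Rightarrow> 'e \<Rightarrow> 'e" and z :: "'x \<Rightarrow> 'e" and nrm :: "'e \<Rightarrow> real"
    and R :: "'g \<Rightarrow> 'e \<Rightarrow> 'e" and V :: "'x set" and n :: nat
    and h :: "'x \<times> (nat \<Rightarrow> real) \<Rightarrow> 'e" and h' :: "'e \<Rightarrow> 'x \<times> (nat \<Rightarrow> real)"
  assumes TG: "topological_groupoid s t u m i"
    and BB: "banach_bundle p add sm z nrm"
    and REP: "groupoid_representation s t u m p add sm R"
    and HOM: "homeomorphism (V \<times> euclid n) (p -` V) h h'"
    and VO: "open V"
    and PH: "\<forall>y\<in>V. \<forall>v\<in>euclid n. p (h (y, v)) = y"
    and HL: "\<forall>y\<in>V. \<forall>v\<in>euclid n. \<forall>w\<in>euclid n. \<forall>a b.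
             h (y, \<lambda>j. a * v j + b * w j) = add (sm a (h (y, v))) (sm b (h (y, w)))"
begin

definition A :: "'g \<Rightarrow> (nat \<Rightarrow> real) \<Rightarrow> (nat \<Rightarrow> real)" where
  "A g v = snd (h' (R g (h (s g, v))))"

lemma ph: "y \<in> V \<Longrightarrow> v \<in> euclid n \<Longrightarrow> p (h (y, v)) = y"
  using PH by simp

lemma hh': "y \<in> V \<Longrightarrow> v \<in> euclid n \<Longrightarrow> h' (h (y, v)) = (y, v)"
  using homeomorphism_apply1[OF HOM, of "(y, v)"] by simp

lemma hq:
  assumes "p q \<in> V"
  shows "q = h (p q, snd (h' q)) \<and> snd (h' q) \<in> euclid n"
proof -
  have q: "q \<in> p -` V" using assms by simp
  have "h' q \<in> V \<times> euclid n" using homeomorphism_image2[OF HOM] q by (metis imageI)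
  then obtain a b where ab: "h' q = (a, b)" "a \<in> V" "b \<in> euclid n" by (metis SigmaE)
  have hq: "h (a, b) = q" using homeomorphism_apply2[OF HOM q] ab(1) by simp
  then have "p q = a" using ph[OF ab(2,3)] by simp
  then show ?thesis using hq ab by simp
qed

lemma F1:
  assumes "s g = y" "t g = y" "y \<in> V" "v \<in> euclid n"
  shows "R g (h (y, v)) = h (y, A g v) \<and> A g v \<in> euclid n"
proof -
  note rf = rep_facts[OF REP]
  have "p (h (y, v)) = s g" using ph[OF assms(3,4)] assms(1) by simp
  then have pP: "p (R g (h (y, v))) = y" using rf(1) assms(2) by simp
  have "A g v = snd (h' (R g (h (y, v))))" unfolding A_def using assms(1) by simp
  then show ?thesis using hq[of "R g (h (y, v))"] pP assms(3) by simp
qed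

lemma F2:
  assumes g: "s g = y" "t g = y" and y: "y \<in> V"
  shows "linE n (A g)"
  unfolding linE_def
proof (intro conjI ballI allI)
  fix v assume "v \<in> euclid n" then show "A g v \<in> euclid n" using F1[OF g y] by simp
next
  fix v w a b assume v: "v \<in> euclid n" and w: "w \<in> euclid n"
  note rf = rep_facts[OF REP]
  have c: "(\<lambda>j. a * v j + b * w j) \<in> euclid n" by (rule euclid_comb[OF v w])
  have Av: "A g v \<in> euclid n" and Aw: "A g w \<in> euclid n" using F1[OF g y] v w by auto
  have p1: "p (sm a (h (y, v))) = s g" using bb_sm[OF BB, of "h (y, v)" y a] ph[OF y v] g by simp
  have p2: "p (sm b (h (y, w))) = s g" using bb_sm[OF BB, of "h (y, w)" y b] ph[OF y w] g by simp
  have p3: "p (h (y, v)) = s g" "p (h (y, w)) = s g" using ph[OF y v] ph[OF y w] g by auto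
  have "R g (h (y, \<lambda>j. a * v j + b * w j)) = R g (add (sm a (h (y, v))) (sm b (h (y, w))))"
    using HL y v w by simp
  also have "\<dots> = add (sm a (R g (h (y, v)))) (sm b (R g (h (y, w))))"
    using rf(3)[OF p1 p2] rf(4)[OF p3(1)] rf(4)[OF p3(2)] by simp
  also have "\<dots> = add (sm a (h (y, A g v))) (sm b (h (y, A g w)))"
    using F1[OF g y v] F1[OF g y w] by simp
  also have "\<dots> = h (y, \<lambda>j. a * A g v j + b * A g w j)"
    using HL y Av Aw by simp
  finally have eq: "R g (h (y, \<lambda>j. a * v j + b * w j)) = h (y, \<lambda>j. a * A g v j + b * A g w j)" .
  have "A g (\<lambda>j. a * v j + b * w j) = snd (h' (R g (h (y, \<lambda>j. a * v j + b * w j))))"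
    unfolding A_def using g by simp
  also have "\<dots> = (\<lambda>j. a * A g v j + b * A g w j)"
    unfolding eq using hh'[OF y euclid_comb[OF Av Aw]] by simp
  finally show "A g (\<lambda>j. a * v j + b * w j) = (\<lambda>j. a * A g v j + b * A g w j)" .
qed

lemma F4:
  assumes y: "y \<in> V" and v: "v \<in> euclid n"
  shows "A (u y) v = v"
proof -
  note tg = tg_facts[OF TG]
  have "R (u y) (h (y, v)) = h (y, v)" by (rule rep_facts(5)[OF REP, OF ph[OF y v]])
  then show ?thesis unfolding A_def using tg(1)[of y] hh'[OF y v] by simp
qed

lemma F3:
  assumes g: "s g = y" "t g = y" and g': "s g' = y" "t g' = y" and y: "y \<in> V" and v: "v \<in> euclid n"
  shows "A (m g g') v = A g (A g' v)"
proof -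
  note tg = tg_facts[OF TG]
  have mg: "s (m g g') = y" "t (m g g') = y" using tg(3,4)[of g g'] g g' by auto
  have A1: "A g' v \<in> euclid n" using F1[OF g' y v] by simp
  have A2: "A g (A g' v) \<in> euclid n" using F1[OF g y A1] by simp
  have "h (y, A (m g g') v) = R (m g g') (h (y, v))" using F1[OF mg y v] by simp
  also have "\<dots> = R g (R g' (h (y, v)))"
    using rep_facts(6)[OF REP, of g g' "h (y, v)"] g g' ph[OF y v] by simp
  also have "\<dots> = h (y, A g (A g' v))" using F1[OF g' y v] F1[OF g y A1] by simp
  finally have "h' (h (y, A (m g g') v)) = h' (h (y, A g (A g' v)))" by simp
  then show ?thesis using hh'[OF y A2] hh'[OF y] F1[OF mg y v] by simp
qed

lemma Fpow:
  assumes g: "s g = y" "t g = y" and y: "y \<in> V"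
  shows "s ((m g ^^ k) (u y)) = y \<and> t ((m g ^^ k) (u y)) = y \<and>
         (\<forall>v\<in>euclid n. A ((m g ^^ k) (u y)) v = (A g ^^ k) v)"
proof (induction k)
  case 0
  show ?case using tg_facts(1,2)[OF TG] F4[OF y] by simp
next
  case (Suc k)
  let ?q = "(m g ^^ k) (u y)"
  have q: "s ?q = y" "t ?q = y" using Suc by auto
  have st: "s (m g ?q) = y" "t (m g ?q) = y" using tg_facts(3,4)[OF TG, of g ?q] g q by auto
  have "A (m g ?q) v = (A g ^^ Suc k) v" if v: "v \<in> euclid n" for v
    using F3[OF g q y v] Suc v by simp
  then show ?case using st by simp
qed

lemma Fcont:
  assumes j: "j < n"
  shows "continuous_on {g. s g \<in> V \<and> t g \<in> V} (\<lambda>g. A g (ev j))"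
proof -
  let ?D = "{g. s g \<in> V \<and> t g \<in> V}"
  note tg = tg_facts[OF TG]
  note rf = rep_facts[OF REP]
  have e: "ev j \<in> euclid n" by (rule ev_euclid[OF j])
  have c0: "continuous_on ?D (\<lambda>g. (s g, ev j))"
    by (intro continuous_on_Pair continuous_on_const continuous_on_subset[OF tg(7)]) simp
  have "(\<lambda>g. (s g, ev j)) ` ?D \<subseteq> V \<times> euclid n" using e by auto
  then have c1: "continuous_on ?D (\<lambda>g. h (s g, ev j))"
    by (rule continuous_on_compose2[OF homeomorphism_cont1[OF HOM] c0])
  have c2: "continuous_on ?D (\<lambda>g. R g (h (s g, ev j)))"
    by (rule cont_R[OF rf(2) continuous_on_id c1]) (simp add: ph e)
  have "(\<lambda>g. R g (h (s g, ev j))) ` ?D \<subseteq> p -` V"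
    using rf(1) ph e by auto
  then have c3: "continuous_on ?D (\<lambda>g. h' (R g (h (s g, ev j))))"
    by (rule continuous_on_compose2[OF homeomorphism_cont2[OF HOM] c2])
  then show ?thesis unfolding A_def by (rule continuous_on_snd)
qed

end


context trivloc begin

lemma closed_part:
  assumes xV: "x \<in> V" and LS: "isotropy_local_sections s t"
    and xc: "x \<in> closure {y. rep_trivial_at s t p R y}"
  shows "rep_trivial_at s t p R x"
  unfolding rep_trivial_at_def
proof (intro ballI)
  fix g e assume g: "g \<in> isotropy s t x" and e: "e \<in> fiber p x"
  note rf = rep_facts[OF REP]
  have "\<exists>U \<gamma>. open U \<and> x \<in> U \<and> continuous_on U \<gamma> \<and> (\<forall>y\<in>U. \<gamma> y \<in> isotropy s t y) \<and> \<gamma> x = g"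
    using LS g unfolding isotropy_local_sections_def by simp
  then obtain U \<gamma> where U: "open U" "x \<in> U" "continuous_on U \<gamma>" "\<forall>y\<in>U. \<gamma> y \<in> isotropy s t y" "\<gamma> x = g"
    by (elim exE conjE) simp
  have pe: "p e = x" using e by (simp add: fiber_def)
  define v where "v = snd (h' e)"
  have ev: "e = h (x, v)" "v \<in> euclid n" using hq[of e] pe xV unfolding v_def by auto
  define Op where "Op = U \<inter> V"
  have oOp: "open Op" unfolding Op_def using U(1) VO by (rule open_Int)
  have xOp: "x \<in> Op" unfolding Op_def using U(2) xV by simp
  have c0: "continuous_on Op (\<lambda>y. (y, v))" by (intro continuous_intros)
  have "(\<lambda>y. (y, v)) ` Op \<subseteq> V \<times> euclid n" using ev(2) by (auto simp: Op_def)
  then have c2: "continuous_on Op (\<lambda>y. h (y, v))"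
    by (rule continuous_on_compose2[OF homeomorphism_cont1[OF HOM] c0])
  have cg: "continuous_on Op \<gamma>" using U(3) by (rule continuous_on_subset) (simp add: Op_def)
  have c1: "continuous_on Op (\<lambda>y. R (\<gamma> y) (h (y, v)))"
  proof (rule cont_R[OF rf(2) cg c2])
    fix y assume "y \<in> Op"
    then have "y \<in> U" "y \<in> V" by (auto simp: Op_def)
    then show "s (\<gamma> y) = p (h (y, v))" using U(4) ph ev(2) by (simp add: isotropy_iff)
  qed
  have ag: "\<forall>y\<in>{y. rep_trivial_at s t p R y} \<inter> Op. R (\<gamma> y) (h (y, v)) = h (y, v)"
  proof
    fix y assume y: "y \<in> {y. rep_trivial_at s t p R y} \<inter> Op"
    then have yU: "y \<in> U" "y \<in> V" by (auto simp: Op_def)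
    have "\<gamma> y \<in> isotropy s t y" using U(4) yU by simp
    moreover have "h (y, v) \<in> fiber p y" using ph[OF yU(2) ev(2)] by (simp add: fiber_def)
    moreover have "rep_trivial_at s t p R y" using y by simp
    ultimately show "R (\<gamma> y) (h (y, v)) = h (y, v)" unfolding rep_trivial_at_def by simp
  qed
  have "R (\<gamma> x) (h (x, v)) = h (x, v)" by (rule agree_closure[OF oOp c1 c2 ag xOp xc])
  then show "R g e = e" using U(5) ev(1) by simp
qed

lemma open_part:
  assumes xV: "x \<in> V" and tx: "rep_trivial_at s t p R x" and PA: "proper_anchor s t"
    and LC: "locally_compact_space (euclidean :: 'g topology)"
  shows "\<exists>T. open T \<and> x \<in> T \<and> T \<subseteq> {y. rep_trivial_at s t p R y}"
proof -
  note tg = tg_facts[OF TG]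
  note rf = rep_facts[OF REP]
  define D where "D = s -` V \<inter> t -` V"
  have oD: "open D" unfolding D_def by (rule open_Int[OF open_vimage[OF VO tg(7)] open_vimage[OF VO tg(8)]])
  have D_eq: "D = {g. s g \<in> V \<and> t g \<in> V}" unfolding D_def by auto
  define \<Psi> where "\<Psi> g = (\<Sum>j<n. nn n (\<lambda>i. A g (ev j) i - ev j i))" for g
  have cPsi: "continuous_on D \<Psi>"
    unfolding \<Psi>_def nn_def
  proof (intro continuous_on_sum continuous_on_rabs continuous_on_diff continuous_on_const)
    fix j i assume "j \<in> {..<n}"
    then have "continuous_on D (\<lambda>g. A g (ev j))" unfolding D_eq using Fcont by simp
    then show "continuous_on D (\<lambda>g. A g (ev j) i)" by (rule continuous_on_product_then_coordinatewise)
  qed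
  define N where "N = \<Psi> -` {..<1/2} \<inter> D"
  have oN: "open N" unfolding N_def by (rule cov[OF oD cPsi open_lessThan])
  have isoN: "g \<in> N" if g: "s g = x" "t g = x" for g
  proof -
    have "A g (ev j) = ev j" if j: "j < n" for j
    proof -
      have e: "ev j \<in> euclid n" by (rule ev_euclid[OF j])
      have "h (x, ev j) \<in> fiber p x" using ph[OF xV e] by (simp add: fiber_def)
      then have "R g (h (x, ev j)) = h (x, ev j)"
        using tx g unfolding rep_trivial_at_def by (simp add: isotropy_iff)
      then show ?thesis unfolding A_def using g hh'[OF xV e] by simp
    qed
    then have "\<Psi> g = 0" unfolding \<Psi>_def nn_def by simp
    then show ?thesis unfolding N_def D_def using g xV by simp
  qed
  have "\<exists>U K. openin euclidean U \<and> compactin euclidean K \<and> u x \<in> U \<and> U \<subseteq> K"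
    using LC unfolding locally_compact_space_def by simp
  then obtain U0 K where UK: "open U0" "compact K" "u x \<in> U0" "U0 \<subseteq> K"
    by (metis compactin_euclidean_iff open_openin)
  have ru: "range u = {g. u (s g) = g}"
  proof
    show "range u \<subseteq> {g. u (s g) = g}" using tg(1) by auto
    show "{g. u (s g) = g} \<subseteq> range u" by (metis (mono_tags) mem_Collect_eq rangeI subsetI)
  qed
  have "continuous_on UNIV (\<lambda>g. u (s g))"
    by (rule continuous_on_compose2[OF tg(9) tg(7)]) simp
  then have cru: "closed (range u)" unfolding ru by (rule closed_Collect_eq[OF _ continuous_on_id])
  define C where "C = s ` (K \<inter> range u)"
  have cC: "compact C" unfolding C_def
    by (rule compact_continuous_image[OF continuous_on_subset[OF tg(7)] compact_Int_closed[OF UK(2) cru]]) simp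
  define Op where "Op = u -` U0"
  have oOp: "open Op" unfolding Op_def by (rule open_vimage[OF UK(1) tg(9)])
  have xOp: "x \<in> Op" unfolding Op_def using UK(3) by simp
  have OpC: "Op \<subseteq> C"
  proof
    fix y assume "y \<in> Op"
    then have "u y \<in> K \<inter> range u" using UK(4) by (auto simp: Op_def)
    then have "s (u y) \<in> C" unfolding C_def by (rule imageI)
    then show "y \<in> C" using tg(1) by simp
  qed
  define Q where "Q = {g. (t g, s g) \<in> C \<times> C}"
  have cQ: "compact Q" unfolding Q_def by (rule PA[unfolded proper_anchor_def, rule_format, OF compact_Times[OF cC cC]])
  define B where "B = Q \<inter> {g. s g = t g} \<inter> - N"
  have cB: "compact B" unfolding B_def
    by (intro compact_Int_closed cQ groupoid_diag_closed[OF TG] closed_Compl oN)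
  have csB: "closed (s ` B)"
    by (rule groupoid_compact_closed[OF TG compact_continuous_image[OF continuous_on_subset[OF tg(7)] cB]]) simp
  define T where "T = (Op \<inter> V) \<inter> - (s ` B)"
  have oT: "open T" unfolding T_def by (intro open_Int oOp VO open_Compl csB)
  have xsB: "x \<notin> s ` B"
  proof
    assume "x \<in> s ` B"
    then obtain g where gB: "g \<in> B" "x = s g" by auto
    then have "s g = x" "t g = x" "g \<notin> N" by (auto simp: B_def)
    then show False using isoN by simp
  qed
  have xT: "x \<in> T" unfolding T_def using xOp xV xsB by simp
  have TS: "T \<subseteq> {y. rep_trivial_at s t p R y}"
  proof
    fix y assume yT: "y \<in> T"
    then have yOp: "y \<in> Op" and yV: "y \<in> V" and ysB: "y \<notin> s ` B" by (auto simp: T_def)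
    have allN: "g \<in> N" if g: "s g = y" "t g = y" for g
    proof (rule ccontr)
      assume "g \<notin> N"
      moreover have "g \<in> Q" unfolding Q_def using g OpC yOp by auto
      ultimately have "g \<in> B" unfolding B_def using g by simp
      then have "y \<in> s ` B" using g(1) by (metis imageI)
      then show False using ysB by simp
    qed
    show "y \<in> {y. rep_trivial_at s t p R y}"
      unfolding mem_Collect_eq rep_trivial_at_def
    proof (intro ballI)
      fix g e assume g: "g \<in> isotropy s t y" and e: "e \<in> fiber p y"
      have gs: "s g = y" "t g = y" using g by (auto simp: isotropy_iff)
      have bd: "(\<Sum>j<n. nn n (\<lambda>i. (A g ^^ k) (ev j) i - ev j i)) \<le> 1/2" for k
      proof -
        have fp: "s ((m g ^^ k) (u y)) = y \<and> t ((m g ^^ k) (u y)) = y \<and>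
           (\<forall>v\<in>euclid n. A ((m g ^^ k) (u y)) v = (A g ^^ k) v)" by (rule Fpow[OF gs yV])
        then have "(m g ^^ k) (u y) \<in> N" using allN by simp
        then have "\<Psi> ((m g ^^ k) (u y)) < 1/2" unfolding N_def by simp
        moreover have "\<Psi> ((m g ^^ k) (u y)) = (\<Sum>j<n. nn n (\<lambda>i. (A g ^^ k) (ev j) i - ev j i))"
          unfolding \<Psi>_def using fp ev_euclid by (intro sum.cong) auto
        ultimately show ?thesis by simp
      qed
      have fix_all: "\<forall>v\<in>euclid n. A g v = v" using nss[OF F2[OF gs yV] bd] by simp
      have pe: "p e = y" using e by (simp add: fiber_def)
      define w where "w = snd (h' e)"
      have ew: "e = h (y, w)" "w \<in> euclid n" using hq[of e] pe yV unfolding w_def by auto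
      have "R g e = h (y, A g w)" using F1[OF gs yV ew(2)] ew(1) by simp
      also have "\<dots> = e" using fix_all ew by simp
      finally show "R g e = e" .
    qed
  qed
  show ?thesis using oT xT TS by blast
qed

end


theorem mainTheorem16:
  fixes s t :: "'g::t2_space \<Rightarrow> 'x::topological_space"
    and u :: "'x \<Rightarrow> 'g" and m :: "'g \<Rightarrow> 'g \<Rightarrow> 'g" and i :: "'g \<Rightarrow> 'g"
    and p :: "'e::t2_space \<Rightarrow> 'x" and add :: "'e \<Rightarrow> 'e \<Rightarrow> 'e"
    and sm :: "real \<Rightarrow> 'e \<Rightarrow> 'e" and z :: "'x \<Rightarrow> 'e" and nrm :: "'e \<Rightarrow> real"
    and R :: "'g \<Rightarrow> 'e \<Rightarrow> 'e" and x0 :: 'x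
  assumes "locally_compact_groupoid s t u m i"
    and "proper_anchor s t"
    and "\<forall>x. lie_group (isotropy s t x) m i (u x)"
    and "isotropy_local_sections s t"
    and "connected (UNIV :: 'x set)"
    and "locally_connected_space (euclidean :: 'x topology)"
    and "banach_bundle p add sm z nrm"
    and "locally_trivial_finite_rank p add sm"
    and "groupoid_representation s t u m p add sm R"
    and "rep_trivial_at s t p R x0"
  shows "\<forall>x. rep_trivial_at s t p R x"
proof -
  note L = assms(1)[unfolded locally_compact_groupoid_def]
  note TG = L[THEN conjunct1] and LC = L[THEN conjunct2, THEN conjunct1]
  have loc: "\<exists>V n h h'. x \<in> V \<and> trivloc s t u m i p add sm z nrm R V n h h'" for x
  proof -
    have "\<exists>U n h h'. open U \<and> x \<in> U
        \<and> homeomorphism (U \<times> euclid n) (p -` U) h h'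
        \<and> (\<forall>y\<in>U. \<forall>v\<in>euclid n. p (h (y, v)) = y)
        \<and> (\<forall>y\<in>U. \<forall>v\<in>euclid n. \<forall>w\<in>euclid n. \<forall>a b.
             h (y, \<lambda>j. a * v j + b * w j) = add (sm a (h (y, v))) (sm b (h (y, w))))"
      using assms(8) unfolding locally_trivial_finite_rank_def by (rule spec)
    then obtain V n h h' where V: "open V" "x \<in> V" "homeomorphism (V \<times> euclid n) (p -` V) h h'"
        "\<forall>y\<in>V. \<forall>v\<in>euclid n. p (h (y, v)) = y"
        "\<forall>y\<in>V. \<forall>v\<in>euclid n. \<forall>w\<in>euclid n. \<forall>a b.
             h (y, \<lambda>j. a * v j + b * w j) = add (sm a (h (y, v))) (sm b (h (y, w)))"
      by (elim exE conjE) simp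
    have "trivloc s t u m i p add sm z nrm R V n h h'"
      by (rule trivloc.intro[OF TG assms(7) assms(9) V(3) V(1) V(4) V(5)])
    then show ?thesis using V(2) by (intro exI conjI)
  qed
  define S where "S = {y. rep_trivial_at s t p R y}"
  have cS: "closed S"
  proof -
    have "closure S \<subseteq> S"
    proof
      fix x assume xc: "x \<in> closure S"
      obtain V n h h' where "x \<in> V" "trivloc s t u m i p add sm z nrm R V n h h'" using loc[of x] by auto
      then have "rep_trivial_at s t p R x"
        using trivloc.closed_part[of s t u m i p add sm z nrm R V n h h' x] assms(4) xc
        unfolding S_def by simp
      then show "x \<in> S" unfolding S_def by simp
    qed
    then show ?thesis using closure_subset_eq by metis
  qed
  have oS: "open S"
  proof (subst open_subopen, intro ballI)
    fix x assume xS: "x \<in> S"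
    obtain V n h h' where "x \<in> V" "trivloc s t u m i p add sm z nrm R V n h h'" using loc[of x] by auto
    then show "\<exists>T. open T \<and> x \<in> T \<and> T \<subseteq> S"
      using trivloc.open_part[of s t u m i p add sm z nrm R V n h h' x] xS assms(2) LC
      unfolding S_def by simp
  qed
  have o2: "openin (top_of_set UNIV) S" using oS by (metis open_openin subtopology_UNIV)
  have c2: "closedin (top_of_set UNIV) S" using cS by (metis closed_closedin subtopology_UNIV)
  have "S = {} \<or> S = UNIV"
    using assms(5)[unfolded connected_clopen, rule_format, OF conjI[OF o2 c2]] .
  moreover have "x0 \<in> S" unfolding S_def using assms(10) by simp
  ultimately have "S = UNIV" by auto
  then show ?thesis unfolding S_def by auto
qed

end
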